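(* Let $R$ be a ring with identity and involution $*$, and let $a,b\in R$ be dual core invertible with dual core inverses $a_{\oplus}$ and $b_{\oplus}$. If $ab=0$ and $ab^*=0$, then $a+b$ is dual core invertible and $$(a+b)_{\oplus}=a_{\oplus}+b_{\oplus}a^{\pi},$$ where $a^{\pi}=1-aa_{\oplus}$.
   Context: An involution on $R$ satisfies $(a^* )^*=a$, $(ab)^*=b^*a^*$, $(a+b)^*=a^*+b^*$. An element $x\in R$ is a dual core inverse of $a$ if $axa=a$, $xR=a^*R$ and $Rx=Ra$; it is unique when it exists and is denoted $a_{\oplus}$. *)

theory Defs
  imports Main
begin

class ring_invol = ring_1 +
  fixes invol :: "'a \<Rightarrow> 'a"
  assumes invol_invol: "invol (invol a) = a"
      and invol_mult: "invol (a * b) = invol b * invol a"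
      and invol_add: "invol (a + b) = invol a + invol b"

definition right_ideal :: "'a::ring_1 \<Rightarrow> 'a set" where
  "right_ideal x = {x * r | r. True}"

definition left_ideal :: "'a::ring_1 \<Rightarrow> 'a set" where
  "left_ideal x = {r * x | r. True}"

definition is_dual_core_inverse :: "'a::ring_invol \<Rightarrow> 'a \<Rightarrow> bool" where
  "is_dual_core_inverse a x \<longleftrightarrow>
     a * x * a = a \<and> right_ideal x = right_ideal (invol a) \<and> left_ideal x = left_ideal a"

definition dual_core_invertible :: "'a::ring_invol \<Rightarrow> bool" where
  "dual_core_invertible a \<longleftrightarrow> (\<exists>x. is_dual_core_inverse a x)"

definition dual_core_inv :: "'a::ring_invol \<Rightarrow> 'a" where
  "dual_core_inv a = (THE x. is_dual_core_inverse a x)"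

end

theory Submission
  imports Defs
begin

lemma invol_zero: "invol (0::'a::ring_invol) = 0"
proof -
  have "invol (0::'a) = invol 0 + invol 0" using invol_add[of "0::'a" 0] by simp
  thus ?thesis by simp
qed

lemma dci_D:
  fixes a x :: "'a::ring_invol"
  assumes "is_dual_core_inverse a x"
  shows "a*x*a=a \<and> x*a*x=x \<and> invol(x*a)=x*a \<and> a*a*x=a \<and> x*x*a=x
         \<and> (\<exists>s. x = invol a * s) \<and> (\<exists>t. x = t*a)"
proof -
  have axa: "a*x*a=a" and r: "right_ideal x = right_ideal (invol a)"
    and l: "left_ideal x = left_ideal a" using assms unfolding is_dual_core_inverse_def by auto
  have "x \<in> right_ideal x" unfolding right_ideal_def by (auto intro: exI[of _ 1])
  then obtain s where s: "x = invol a * s" using r unfolding right_ideal_def by auto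
  have "x \<in> left_ideal x" unfolding left_ideal_def by (auto intro: exI[of _ 1])
  then obtain t where t: "x = t * a" using l unfolding left_ideal_def by auto
  have "a \<in> left_ideal a" unfolding left_ideal_def by (auto intro: exI[of _ 1])
  then obtain u where u: "a = u * x" using l unfolding left_ideal_def by auto
  have ia: "invol a = invol a * invol x * invol a"
    using arg_cong[OF axa, of invol] by (simp add: invol_mult mult.assoc)
  have ex: "invol (x*a) * x = x"
  proof -
    have "invol (x*a) * x = invol a * invol x * invol a * s" using s by (simp add: invol_mult mult.assoc)
    also have "\<dots> = x" using ia s by simp
    finally show ?thesis .
  qed
  have p1: "invol (x*a) * (x*a) = x*a" using ex by (metis mult.assoc)
  have sa: "invol (x*a) = x*a"
  proof -
    have "invol (x*a) = invol (invol (x*a) * (x*a))" using p1 by simp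
    also have "\<dots> = invol (x*a) * (x*a)" by (simp add: invol_mult invol_invol)
    finally show ?thesis using p1 by simp
  qed
  have xax: "x*a*x = x" using ex sa by simp
  have aax: "a*a*x = a"
  proof -
    have "a = u * (x*a*x)" using u xax by simp
    also have "\<dots> = (u*x)*a*x" by (simp add: mult.assoc)
    finally show ?thesis using u by simp
  qed
  have xxa: "x*x*a = x"
  proof -
    have "x*x*a = t*(a*x*a)" using t by (simp add: mult.assoc)
    thus ?thesis using axa t by simp
  qed
  show ?thesis using axa xax sa aax xxa s t by blast
qed

lemma dci_I:
  fixes c y :: "'a::ring_invol"
  assumes cyc: "c*y*c=c" and ycy: "y*c*y=y" and sa: "invol(y*c)=y*c"
    and ccy: "c*c*y=c" and yyc: "y*y*c=y"
  shows "is_dual_core_inverse c y"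
proof -
  have y1: "y = invol c * (invol y * y)"
  proof -
    have "y = invol (y*c) * y" using ycy sa by simp
    thus ?thesis by (simp add: invol_mult mult.assoc)
  qed
  have c1: "invol c = y * (c * invol c)"
  proof -
    have "invol c = invol (c*y*c)" using cyc by simp
    also have "\<dots> = invol (y*c) * invol c" by (simp add: invol_mult mult.assoc)
    finally show ?thesis using sa by (simp add: mult.assoc)
  qed
  have y2: "y = (y*y)*c" using yyc by simp
  have c2: "c = (c*c)*y" using ccy by simp
  have "right_ideal y = right_ideal (invol c)"
    unfolding right_ideal_def
  proof (auto)
    fix r show "\<exists>ra. y * r = invol c * ra" by (rule exI[of _ "invol y * y * r"], subst y1, simp add: mult.assoc)
  next
    fix r show "\<exists>ra. invol c * r = y * ra" by (rule exI[of _ "c * invol c * r"], subst c1, simp add: mult.assoc)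
  qed
  moreover have "left_ideal y = left_ideal c"
    unfolding left_ideal_def
  proof (auto)
    fix r show "\<exists>ra. r * y = ra * c" by (rule exI[of _ "r * (y*y)"], subst y2, simp add: mult.assoc)
  next
    fix r show "\<exists>ra. r * c = ra * y" by (rule exI[of _ "r * (c*c)"], subst c2, simp add: mult.assoc)
  qed
  ultimately show ?thesis using cyc unfolding is_dual_core_inverse_def by simp
qed

lemma dci_unique:
  fixes a x y :: "'a::ring_invol"
  assumes "is_dual_core_inverse a x" "is_dual_core_inverse a y"
  shows "x = y"
proof -
  have X: "a*x*a=a" "x*a*x=x" "invol(x*a)=x*a" "a*a*x=a" "x*x*a=x" using dci_D[OF assms(1)] by auto
  have Y: "a*y*a=a" "y*a*y=y" "invol(y*a)=y*a" "a*a*y=a" "y*y*a=y" using dci_D[OF assms(2)] by auto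
  have "x*a = invol (x*a)" using X by simp
  also have "\<dots> = invol a * invol x" by (simp add: invol_mult)
  also have "\<dots> = invol (a*y*a) * invol x" using Y by simp
  also have "\<dots> = invol (y*a) * invol (x*a)" by (simp add: invol_mult mult.assoc)
  also have "\<dots> = y*a*(x*a)" using X Y by simp
  also have "\<dots> = y*(a*x*a)" by (simp add: mult.assoc)
  finally have xa: "x*a = y*a" using X by simp
  have "x = y*a*x" using X xa by metis
  also have "\<dots> = (y*y*a)*a*x" using Y by simp
  also have "\<dots> = y*y*(a*a*x)" by (simp add: mult.assoc)
  also have "\<dots> = y" using X Y by simp
  finally show ?thesis .
qed

lemma dci_inv_eq:
  assumes "is_dual_core_inverse a x" shows "dual_core_inv a = x"
  unfolding dual_core_inv_def using assms by (metis dci_unique the_equality)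

theorem theorem4p8:
  fixes a b :: "'a::ring_invol"
  assumes "dual_core_invertible a" and "dual_core_invertible b"
    and "a * b = 0" and "a * invol b = 0"
  shows "dual_core_invertible (a + b) \<and>
         dual_core_inv (a + b) = dual_core_inv a + dual_core_inv b * (1 - a * dual_core_inv a)"
proof -
  obtain x where hx: "is_dual_core_inverse a x" using assms(1) unfolding dual_core_invertible_def by auto
  obtain z where hz: "is_dual_core_inverse b z" using assms(2) unfolding dual_core_invertible_def by auto
  have X: "a*x*a=a" "x*a*x=x" "invol(x*a)=x*a" "a*a*x=a" "x*x*a=x" using dci_D[OF hx] by auto
  have Z: "b*z*b=b" "z*b*z=z" "invol(z*b)=z*b" "b*b*z=b" "z*z*b=z" using dci_D[OF hz] by auto
  obtain s t where s: "x = invol a * s" and t: "x = t*a" using dci_D[OF hx] by auto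
  obtain s' t' where s': "z = invol b * s'" and t': "z = t'*b" using dci_D[OF hz] by auto
  have ab: "a*b = 0" and abs: "a * invol b = 0" using assms by auto
  have bas: "b * invol a = 0" using arg_cong[OF abs, of invol] by (simp add: invol_mult invol_invol invol_zero)
  have bx: "b*x = 0" using s bas by (simp add: mult.assoc[symmetric])
  have az: "a*z = 0" using s' abs by (simp add: mult.assoc[symmetric])
  have xb: "x*b = 0" using t ab by (simp add: mult.assoc)
  have xz: "x*z = 0" using t s' abs by (simp add: mult.assoc) (metis mult.assoc mult_zero_left mult_zero_right)
  have zx: "z*x = 0" using t' s bas by (metis mult.assoc mult_zero_left mult_zero_right)
  define y where "y = x + z*(1 - a*x)"
  define c where "c = a + b"
  have zaxa: "z*a*x*a = z*a" using X by (simp add: mult.assoc)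
  have yc: "y*c = x*a + z*b"
  proof -
    have "y*c = x*a + x*b + z*a + z*b - z*a*x*a - z*a*x*b"
      unfolding y_def c_def by (simp add: algebra_simps)
    thus ?thesis using X xb by (simp add: algebra_simps)
  qed
  have cy: "c*y = a*x + b*z - b*z*a*x"
  proof -
    have "c*y = a*x + a*z - a*z*a*x + b*x + b*z - b*z*a*x"
      unfolding y_def c_def by (simp add: algebra_simps)
    thus ?thesis using az bx by simp
  qed
  have "c*y*c = c"
  proof -
    have "c*y*c = a*x*a + a*x*b + b*z*a + b*z*b - b*z*a*x*a - b*z*a*x*b"
      unfolding cy unfolding c_def by (simp add: algebra_simps)
    also have "\<dots> = c" using X Z ab xb bx az xz zx unfolding c_def by (simp add: mult.assoc algebra_simps)
    finally show ?thesis .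
  qed
  moreover have "y*c*y = y"
  proof -
    have "y*c*y = x*a*x + x*a*z - x*a*z*a*x + z*b*x + z*b*z - z*b*z*a*x"
      unfolding yc unfolding y_def by (simp add: algebra_simps)
    also have "\<dots> = y" using X Z ab xb bx az xz zx unfolding y_def by (simp add: mult.assoc algebra_simps)
    finally show ?thesis .
  qed
  moreover have "invol (y*c) = y*c" unfolding yc using X Z by (simp add: invol_add)
  moreover have "c*c*y = c"
  proof -
    have "c*c*y = a*a*x + a*b*z - a*b*z*a*x + b*a*x + b*b*z - b*b*z*a*x"
      unfolding mult.assoc[of c c y] cy unfolding c_def by (simp add: algebra_simps)
    also have "\<dots> = c" using X Z ab xb bx az xz zx unfolding c_def by (simp add: mult.assoc algebra_simps)
    finally show ?thesis .
  qed
  moreover have "y*y*c = y"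
  proof -
    have "y*y*c = x*x*a + x*z*b + z*x*a + z*z*b - z*a*x*x*a - z*a*x*z*b"
      unfolding mult.assoc[of y y c] yc unfolding y_def by (simp add: algebra_simps)
    also have "\<dots> = y" using X Z ab xb bx az xz zx unfolding y_def by (simp add: mult.assoc algebra_simps)
    finally show ?thesis .
  qed
  ultimately have hy: "is_dual_core_inverse c y" by (rule dci_I)
  show ?thesis
    using hy dci_inv_eq[OF hy] dci_inv_eq[OF hx] dci_inv_eq[OF hz]
    unfolding dual_core_invertible_def c_def y_def by auto
qed

end
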